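(* (Working in $\mathbf{ZF}$.) Let $X$ be a weakly normal generalized topological space such that $X_{top}$ is locally compact and not compact, and let $\hat X$ be the Alexandroff strict compactification of $X$. Then the operator $\mathrm{Ex}_{\hat X}$ is finitely additive if and only if, for every pair $A,B$ of disjoint members of $\mathrm{Cl}_X$, at least one of the sets $A,B$ is topologically compact.
   Context: A generalized topological space (gts) $(X,\mathrm{Op}_X,\mathrm{Cov}_X)$ is in the sense of Delfs–Knebusch ($\mathrm{Op}_X$ contains $\emptyset,X$ and is closed under finite unions and intersections; $\mathrm{Cov}_X$ a collection of families of open sets satisfying the Delfs–Knebusch axioms). $\mathrm{Cl}_X$ = complements of open sets; $X_{top}$ = $X$ with topology generated by $\mathrm{Op}_X$; a subset is topologically compact if it is compact as a subspace of $X_{top}$. $X$ is weakly normal if any two disjoint sets, each a singleton or in $\mathrm{Cl}_X$, lie in disjoint open sets. $\mathrm{Kc}_X$ is the set of topologically compact members of $\mathrm{Cl}_X$. For $\infty\notin X$, the Alexandroff strict compactification is $\hat X=X\cup\{\infty\}$ with $\mathrm{Op}_{\hat X}=\mathrm{Op}_X\cup\{\hat X\setminus C:C\in\mathrm{Kc}_X\}$ and $\mathrm{Cov}_{\hat X}=\{\mathcal U\subseteq\mathrm{Op}_{\hat X}:\{U\cap X:U\in\mathcal U\}\in\mathrm{Cov}_X\}$; $\hat X_{top}$ is $\hat X$ with the topology generated by $\mathrm{Op}_{\hat X}$, a compactification of $X_{top}$. For $U\in\mathrm{Op}_X$, $\mathrm{Ex}_{\hat X}(U)=\hat X\setminus\mathrm{cl}_{\hat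 X_{top}}(X\setminus U)$; $\mathrm{Ex}_{\hat X}$ is finitely additive if $\{\mathrm{Ex}_{\hat X}(U):U\in\mathrm{Op}_X\}$ is stable under finite unions. *)

theory Defs
  imports "HOL-Analysis.Analysis"
begin

text \<open>Generalized topological spaces in the sense of Delfs--Knebusch
  (axioms as listed e.g. by Piekosz--Wajch).\<close>

definition is_gts :: "'a set \<Rightarrow> 'a set set \<Rightarrow> 'a set set set \<Rightarrow> bool" where
  "is_gts X Op Cov \<longleftrightarrow>
     Op \<subseteq> Pow X \<and>
     {} \<in> Op \<and> X \<in> Op \<and>
     (\<forall>U\<in>Op. \<forall>V\<in>Op. U \<union> V \<in> Op \<and> U \<inter> V \<in> Op) \<and>
     (\<forall>\<U>\<in>Cov. \<U> \<subseteq> Op \<and> \<Union>\<U> \<in> Op) \<and>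
     (\<forall>\<U>. \<U> \<subseteq> Op \<and> finite \<U> \<longrightarrow> \<U> \<in> Cov) \<and>
     (\<forall>\<U>\<in>Cov. \<forall>V\<in>Op. (\<lambda>U. U \<inter> V) ` \<U> \<in> Cov) \<and>
     (\<forall>\<U>\<in>Cov. \<forall>\<V>. (\<forall>U\<in>\<U>. \<V> U \<in> Cov \<and> \<Union>(\<V> U) = U)
          \<longrightarrow> (\<Union>U\<in>\<U>. \<V> U) \<in> Cov) \<and>
     (\<forall>\<U>\<in>Cov. \<forall>\<V>. \<V> \<subseteq> Op \<and> \<Union>\<V> = \<Union>\<U> \<and> (\<forall>U\<in>\<U>. \<exists>V\<in>\<V>. U \<subseteq> V)
          \<longrightarrow> \<V> \<in> Cov) \<and>
     (\<forall>\<U>. \<forall>\<V>\<in>Cov. \<U> \<subseteq> Op \<and> \<Union>\<U> = \<Union>\<V> \<and>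
          (\<forall>V\<in>\<V>. (\<lambda>U. V \<inter> U) ` \<U> \<in> Cov) \<longrightarrow> \<U> \<in> Cov)"

definition gts_Cl :: "'a set \<Rightarrow> 'a set set \<Rightarrow> 'a set set" where
  "gts_Cl X Op = {X - U | U. U \<in> Op}"

definition gts_top :: "'a set set \<Rightarrow> 'a topology" where
  "gts_top Op = topology_generated_by Op"

definition weakly_normal :: "'a set \<Rightarrow> 'a set set \<Rightarrow> bool" where
  "weakly_normal X Op \<longleftrightarrow>
     (\<forall>A B. (A \<in> gts_Cl X Op \<or> (\<exists>x\<in>X. A = {x})) \<and>
            (B \<in> gts_Cl X Op \<or> (\<exists>x\<in>X. B = {x})) \<and> A \<inter> B = {}
        \<longrightarrow> (\<exists>U\<in>Op. \<exists>V\<in>Op. A \<subseteq> U \<and> B \<subseteq> V \<and> U \<inter> V = {}))"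

definition gts_Kc :: "'a set \<Rightarrow> 'a set set \<Rightarrow> 'a set set" where
  "gts_Kc X Op = {C \<in> gts_Cl X Op. compactin (gts_top Op) C}"

definition alex_Op :: "'a set \<Rightarrow> 'a set set \<Rightarrow> 'a \<Rightarrow> 'a set set" where
  "alex_Op X Op pinf = Op \<union> {insert pinf X - C | C. C \<in> gts_Kc X Op}"

definition alex_Cov :: "'a set \<Rightarrow> 'a set set \<Rightarrow> 'a set set set \<Rightarrow> 'a \<Rightarrow> 'a set set set" where
  "alex_Cov X Op Cov pinf =
     {\<U>. \<U> \<subseteq> alex_Op X Op pinf \<and> (\<lambda>U. U \<inter> X) ` \<U> \<in> Cov}"

definition alex_Ex :: "'a set \<Rightarrow> 'a set set \<Rightarrow> 'a \<Rightarrow> 'a set \<Rightarrow> 'a set" where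
  "alex_Ex X Op pinf U =
     insert pinf X - (gts_top (alex_Op X Op pinf)) closure_of (X - U)"

definition alex_Ex_finitely_additive :: "'a set \<Rightarrow> 'a set set \<Rightarrow> 'a \<Rightarrow> bool" where
  "alex_Ex_finitely_additive X Op pinf \<longleftrightarrow>
     (\<forall>F. finite F \<and> F \<subseteq> alex_Ex X Op pinf ` Op \<longrightarrow> \<Union>F \<in> alex_Ex X Op pinf ` Op)"

end

theory Submission
  imports Defs
begin

lemma gen_local_base:
  assumes "generate_topology_on B s"
    and cl: "\<And>a b. a \<in> B \<Longrightarrow> b \<in> B \<Longrightarrow> a \<inter> b \<in> B"
  shows "\<forall>x\<in>s. \<exists>b\<in>B. x \<in> b \<and> b \<subseteq> s"
  using assms(1)
proof (induction rule: generate_topology_on.induct)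
  case Empty then show ?case by simp
next
  case (Int a b)
  show ?case
  proof
    fix x assume x: "x \<in> a \<inter> b"
    obtain p where "p \<in> B" "x \<in> p" "p \<subseteq> a"
      using Int.IH(1) x by auto
    moreover obtain q where "q \<in> B" "x \<in> q" "q \<subseteq> b"
      using Int.IH(2) x by auto
    ultimately show "\<exists>c\<in>B. x \<in> c \<and> c \<subseteq> a \<inter> b" using cl[of p q] by auto
  qed
next
  case (UN K) 
  show ?case
  proof
    fix x assume "x \<in> \<Union>K"
    then obtain k where k: "k \<in> K" "x \<in> k" by auto
    then obtain p where "p \<in> B" "x \<in> p" "p \<subseteq> k" using UN.IH by meson
    then show "\<exists>c\<in>B. x \<in> c \<and> c \<subseteq> \<Union>K" using k by auto
  qed
next
  case (Basis s) then show ?case by blast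
qed

lemma open_local_base:
  assumes "openin (topology_generated_by B) s"
    and "\<And>a b. a \<in> B \<Longrightarrow> b \<in> B \<Longrightarrow> a \<inter> b \<in> B"
    and "x \<in> s"
  shows "\<exists>b\<in>B. x \<in> b \<and> b \<subseteq> s"
  using gen_local_base[OF openin_topology_generated_by[OF assms(1)] assms(2)] assms(3) by blast

lemma gts_basic0:
  assumes "is_gts X Op Cov"
  shows "Op \<subseteq> Pow X \<and> {} \<in> Op \<and> X \<in> Op \<and> (\<forall>U\<in>Op. \<forall>V\<in>Op. U \<union> V \<in> Op \<and> U \<inter> V \<in> Op)"
  using assms[unfolded is_gts_def] by (elim conjE) (intro conjI; assumption)

lemma gts_basic:
  assumes "is_gts X Op Cov"
  shows "Op \<subseteq> Pow X" "{} \<in> Op" "X \<in> Op"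
    "\<And>U V. U \<in> Op \<Longrightarrow> V \<in> Op \<Longrightarrow> U \<union> V \<in> Op"
    "\<And>U V. U \<in> Op \<Longrightarrow> V \<in> Op \<Longrightarrow> U \<inter> V \<in> Op"
  using gts_basic0[OF assms] by auto

lemma finite_union_Op:
  assumes "is_gts X Op Cov" "finite F" "F \<subseteq> Op"
  shows "\<Union>F \<in> Op"
  using assms(2,3)
proof (induction rule: finite_induct)
  case empty then show ?case using gts_basic[OF assms(1)] by simp
next
  case (insert x F) then show ?case using gts_basic[OF assms(1)] by simp
qed

theorem proposition7p12:
  fixes X :: "'a set" and Op :: "'a set set" and Cov :: "'a set set set" and pinf :: 'a
  assumes "is_gts X Op Cov"
    and "weakly_normal X Op"
    and "locally_compact_space (gts_top Op)"
    and "\<not> compact_space (gts_top Op)"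
    and "pinf \<notin> X"
  shows "alex_Ex_finitely_additive X Op pinf \<longleftrightarrow>
         (\<forall>A\<in>gts_Cl X Op. \<forall>B\<in>gts_Cl X Op. A \<inter> B = {} \<longrightarrow>
             compactin (gts_top Op) A \<or> compactin (gts_top Op) B)"
proof -
  define T where "T = gts_top Op"
  define T' where "T' = gts_top (alex_Op X Op pinf)"
  define E where "E = alex_Ex X Op pinf"
  note G = gts_basic[OF assms(1)]
  have topT: "topspace T = X" unfolding T_def gts_top_def using G(1,3) by auto
  have openT: "\<And>U. U \<in> Op \<Longrightarrow> openin T U"
    unfolding T_def gts_top_def by (simp add: topology_generated_by_Basis)
  have Cl_iff: "\<And>A. A \<in> gts_Cl X Op \<longleftrightarrow> (\<exists>U\<in>Op. A = X - U)"
    unfolding gts_Cl_def by blast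
  have closedT: "closedin T (X - U)" if "U \<in> Op" for U
    using closedin_diff[OF closedin_topspace openT[OF that]] topT by simp
  have baseT: "\<exists>b\<in>Op. x \<in> b \<and> b \<subseteq> s" if "openin T s" "x \<in> s" for s x
    using open_local_base[of Op s x, OF _ G(5)] that unfolding T_def gts_top_def by blast
  have KcI: "\<And>C. C \<in> gts_Cl X Op \<Longrightarrow> compactin T C \<Longrightarrow> C \<in> gts_Kc X Op"
    unfolding gts_Kc_def T_def by blast
  have KcD: "\<And>C. C \<in> gts_Kc X Op \<Longrightarrow> C \<in> gts_Cl X Op \<and> compactin T C"
    unfolding gts_Kc_def T_def by blast
  have aOp: "\<And>S. S \<in> alex_Op X Op pinf \<longleftrightarrow> S \<in> Op \<or> (\<exists>C\<in>gts_Kc X Op. S = insert pinf X - C)"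
    unfolding alex_Op_def by blast
  have aInt: "\<And>a b. a \<in> alex_Op X Op pinf \<Longrightarrow> b \<in> alex_Op X Op pinf \<Longrightarrow> a \<inter> b \<in> alex_Op X Op pinf"
  proof -
    fix a b assume a: "a \<in> alex_Op X Op pinf" and b: "b \<in> alex_Op X Op pinf"
    have mix: "U \<inter> (insert pinf X - C) \<in> Op" if mU: "U \<in> Op" and mC: "C \<in> gts_Kc X Op" for U C
    proof -
      obtain W where W: "W \<in> Op" "C = X - W" using KcD[OF mC] Cl_iff by blast
      have "U \<subseteq> X" "W \<subseteq> X" using mU W(1) G(1) by auto
      then have "U \<inter> (insert pinf X - C) = U \<inter> W" using W(2) assms(5) by blast
      then show ?thesis using G(5) mU W(1) by simp
    qed
    have both: "(insert pinf X - C1) \<inter> (insert pinf X - C2) \<in> alex_Op X Op pinf"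
      if c1: "C1 \<in> gts_Kc X Op" and c2: "C2 \<in> gts_Kc X Op" for C1 C2
    proof -
      obtain W1 where W1: "W1 \<in> Op" "C1 = X - W1" using KcD[OF c1] Cl_iff by blast
      obtain W2 where W2: "W2 \<in> Op" "C2 = X - W2" using KcD[OF c2] Cl_iff by blast
      have "C1 \<union> C2 = X - (W1 \<inter> W2)" using W1 W2 by blast
      then have "C1 \<union> C2 \<in> gts_Cl X Op" using Cl_iff G(5) W1(1) W2(1) by blast
      moreover have "compactin T (C1 \<union> C2)" using KcD[OF c1] KcD[OF c2] compactin_Un by blast
      ultimately have "C1 \<union> C2 \<in> gts_Kc X Op" using KcI by blast
      moreover have "(insert pinf X - C1) \<inter> (insert pinf X - C2) = insert pinf X - (C1 \<union> C2)" by blast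
      ultimately show ?thesis using aOp by blast
    qed
    have a': "a \<in> Op \<or> (\<exists>C\<in>gts_Kc X Op. a = insert pinf X - C)" using a aOp by blast
    have b': "b \<in> Op \<or> (\<exists>C\<in>gts_Kc X Op. b = insert pinf X - C)" using b aOp by blast
    show "a \<inter> b \<in> alex_Op X Op pinf"
    proof (cases "a \<in> Op")
      case aO: True
      show ?thesis
      proof (cases "b \<in> Op")
        case True then show ?thesis using aO G(5) aOp by blast
      next
        case False
        then obtain C where "C \<in> gts_Kc X Op" "b = insert pinf X - C" using b' by blast
        then show ?thesis using mix[OF aO] aOp by blast
      qed
    next
      case aN: False
      then obtain C1 where C1: "C1 \<in> gts_Kc X Op" "a = insert pinf X - C1" using a' by blast
      show ?thesis
      proof (cases "b \<in> Op")
        case True then show ?thesis using mix[OF True C1(1)] C1(2) aOp by (simp add: Int_commute)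
      next
        case False
        then obtain C2 where "C2 \<in> gts_Kc X Op" "b = insert pinf X - C2" using b' by blast
        then show ?thesis using both[OF C1(1)] C1(2) by simp
      qed
    qed
  qed
  have emptyKc: "{} \<in> gts_Kc X Op"
    using KcI Cl_iff G(3) by (metis Diff_cancel compactin_empty)
  have topT': "topspace T' = insert pinf X"
  proof -
    have "insert pinf X \<in> alex_Op X Op pinf" using aOp emptyKc by force
    moreover have "\<forall>S\<in>alex_Op X Op pinf. S \<subseteq> insert pinf X" using aOp G(1) by blast
    ultimately show ?thesis unfolding T'_def gts_top_def by auto
  qed
  have openT': "\<And>U. U \<in> alex_Op X Op pinf \<Longrightarrow> openin T' U"
    unfolding T'_def gts_top_def by (simp add: topology_generated_by_Basis)
  have baseT': "\<exists>b\<in>alex_Op X Op pinf. x \<in> b \<and> b \<subseteq> s" if "openin T' s" "x \<in> s" for s x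
    using open_local_base[of "alex_Op X Op pinf" s x, OF _ aInt] that unfolding T'_def gts_top_def by blast
  have Ex_eq: "E U = (if compactin T (X - U) then insert pinf U else U)" if U: "U \<in> Op" for U
  proof -
    have UX: "U \<subseteq> X" using U G(1) by auto
    let ?A = "X - U"
    have "y \<in> E U \<longleftrightarrow> y \<in> (if compactin T ?A then insert pinf U else U)" for y
    proof (cases "y \<in> insert pinf X")
      case False
      then show ?thesis unfolding E_def alex_Ex_def using UX by auto
    next
      case yin: True
      have Eiff: "y \<in> E U \<longleftrightarrow> (\<exists>S. y \<in> S \<and> openin T' S \<and> S \<inter> ?A = {})"
        unfolding E_def alex_Ex_def T'_def[symmetric] using yin topT' by (auto simp: in_closure_of)
      show ?thesis
      proof (cases "y = pinf")
        case yp: True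
        show ?thesis
        proof (cases "compactin T ?A")
          case True
          have "?A \<in> gts_Kc X Op" using KcI Cl_iff U True by blast
          then have "openin T' (insert pinf X - ?A)" using openT' aOp by blast
          then show ?thesis using Eiff yp True assms(5) by auto
        next
          case False
          have "y \<notin> E U"
          proof
            assume "y \<in> E U"
            then obtain S where S: "y \<in> S" "openin T' S" "S \<inter> ?A = {}" using Eiff by blast
            then obtain b where b: "b \<in> alex_Op X Op pinf" "pinf \<in> b" "b \<subseteq> S" using baseT' yp by blast
            have "b \<notin> Op" using b(2) G(1) assms(5) by blast
            then obtain C where C: "C \<in> gts_Kc X Op" "b = insert pinf X - C" using b(1) aOp by blast
            have "?A \<subseteq> C" using C(2) b(3) S(3) by blast
            then have "compactin T ?A" using closed_compactin KcD[OF C(1)] closedT[OF U] by blast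
            then show False using False by simp
          qed
          then show ?thesis using yp False assms(5) UX by auto
        qed
      next
        case ynp: False
        then have yX: "y \<in> X" using yin by simp
        show ?thesis
        proof (cases "y \<in> U")
          case True
          then have "y \<in> E U" using Eiff openT' aOp U by blast
          then show ?thesis using True by auto
        next
          case False
          then have "y \<notin> E U" using Eiff yX by blast
          then show ?thesis using False ynp by auto
        qed
      qed
    qed
    then show ?thesis by blast
  qed
  have XU: "\<And>U. U \<in> Op \<Longrightarrow> X - (X - U) = U" using G(1) by blast
  have nbhd: "\<exists>W\<in>Op. \<exists>C. compactin T C \<and> K \<subseteq> W \<and> W \<subseteq> C" if K: "compactin T K" for K
  proof -
    let ?U = "{Q \<in> Op. \<exists>K'. compactin T K' \<and> Q \<subseteq> K'}"
    have cov: "K \<subseteq> \<Union>?U"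
    proof
      fix x assume "x \<in> K"
      then have "x \<in> topspace T" using K compactin_subset_topspace by blast
      then obtain V K' where "openin T V" "compactin T K'" "x \<in> V" "V \<subseteq> K'"
        using assms(3) unfolding T_def locally_compact_space_def by blast
      then obtain b where "b \<in> Op" "x \<in> b" "b \<subseteq> V" using baseT by blast
      then show "x \<in> \<Union>?U" using \<open>compactin T K'\<close> \<open>V \<subseteq> K'\<close> by blast
    qed
    obtain F where F: "finite F" "F \<subseteq> ?U" "K \<subseteq> \<Union>F"
      using K cov openT unfolding compactin_def by (metis (no_types, lifting) mem_Collect_eq)
    define ch where "ch Q = (SOME K'. compactin T K' \<and> Q \<subseteq> K')" for Q
    have ch: "compactin T (ch Q) \<and> Q \<subseteq> ch Q" if "Q \<in> F" for Q
      using F(2) that unfolding ch_def by (metis (mono_tags, lifting) mem_Collect_eq someI_ex subsetD)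
    have "\<Union>F \<in> Op" using finite_union_Op[OF assms(1) F(1)] F(2) by blast
    moreover have "compactin T (\<Union>(ch ` F))" using compactin_Union F(1) ch by blast
    moreover have "\<Union>F \<subseteq> \<Union>(ch ` F)" using ch by blast
    ultimately show ?thesis using F(3) by blast
  qed
  have L: "\<not> compactin T (A \<inter> B)"
    if P: "\<forall>A\<in>gts_Cl X Op. \<forall>B\<in>gts_Cl X Op. A \<inter> B = {} \<longrightarrow> compactin T A \<or> compactin T B"
    and A: "A \<in> gts_Cl X Op" and B: "B \<in> gts_Cl X Op"
    and nA: "\<not> compactin T A" and nB: "\<not> compactin T B" for A B
  proof
    assume "compactin T (A \<inter> B)"
    then obtain W C where W: "W \<in> Op" "compactin T C" "A \<inter> B \<subseteq> W" "W \<subseteq> C" using nbhd by blast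
    obtain U where U: "U \<in> Op" "A = X - U" using A Cl_iff by blast
    obtain V where V: "V \<in> Op" "B = X - V" using B Cl_iff by blast
    have e1: "A - W = X - (U \<union> W)" and e2: "B - W = X - (V \<union> W)" using U V by auto
    have "U \<union> W \<in> Op" "V \<union> W \<in> Op" using G(4) U(1) V(1) W(1) by auto
    then have c1: "A - W \<in> gts_Cl X Op" and c2: "B - W \<in> gts_Cl X Op"
      unfolding e1 e2 Cl_iff by blast+
    have d: "(A - W) \<inter> (B - W) = {}" using W(3) by blast
    have "compactin T (A - W) \<or> compactin T (B - W)" using P c1 c2 d by blast
    moreover have kA: "compactin T (A \<inter> C)" using closed_Int_compactin[OF closedT[OF U(1)] W(2)] U(2) by simp
    moreover have kB: "compactin T (B \<inter> C)" using closed_Int_compactin[OF closedT[OF V(1)] W(2)] V(2) by simp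
    moreover have "A = (A - W) \<union> (A \<inter> C)" "B = (B - W) \<union> (B \<inter> C)" using W(4) by blast+
    ultimately show False
    proof (elim disjE)
      assume "compactin T (A - W)"
      then have "compactin T ((A - W) \<union> (A \<inter> C))" using kA compactin_Un by blast
      then show False using nA \<open>A = (A - W) \<union> (A \<inter> C)\<close> by simp
    next
      assume "compactin T (B - W)"
      then have "compactin T ((B - W) \<union> (B \<inter> C))" using kB compactin_Un by blast
      then show False using nB \<open>B = (B - W) \<union> (B \<inter> C)\<close> by simp
    qed
  qed
  show ?thesis
    unfolding T_def[symmetric] alex_Ex_finitely_additive_def E_def[symmetric]
  proof
    assume fa: "\<forall>F. finite F \<and> F \<subseteq> E ` Op \<longrightarrow> \<Union>F \<in> E ` Op"
    show "\<forall>A\<in>gts_Cl X Op. \<forall>B\<in>gts_Cl X Op. A \<inter> B = {} \<longrightarrow> compactin T A \<or> compactin T B"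
    proof (intro ballI impI)
      fix A B assume A: "A \<in> gts_Cl X Op" and B: "B \<in> gts_Cl X Op" and d: "A \<inter> B = {}"
      show "compactin T A \<or> compactin T B"
      proof (rule ccontr)
        assume "\<not> (compactin T A \<or> compactin T B)"
        then have nA: "\<not> compactin T A" and nB: "\<not> compactin T B" by auto
        obtain U where U: "U \<in> Op" "A = X - U" using A Cl_iff by blast
        obtain V where V: "V \<in> Op" "B = X - V" using B Cl_iff by blast
        have "E U = U" "E V = V" using Ex_eq U V nA nB by auto
        then have "U \<in> E ` Op" "V \<in> E ` Op" using U(1) V(1) by (metis image_eqI)+
        then have "\<Union>{U, V} \<in> E ` Op" using fa[rule_format, of "{U, V}"] by simp
        then have "U \<union> V \<in> E ` Op" by simp
        then obtain W where W: "W \<in> Op" "E W = U \<union> V" by auto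
        have UV: "U \<union> V = X" using U V d G(1) by blast
        show False
        proof (cases "compactin T (X - W)")
          case True
          then have "pinf \<in> E W" using Ex_eq W(1) by simp
          then show False using W(2) UV assms(5) by simp
        next
          case False
          then have "W = X" using Ex_eq W UV by simp
          then show False using False by simp
        qed
      qed
    qed
  next
    assume P: "\<forall>A\<in>gts_Cl X Op. \<forall>B\<in>gts_Cl X Op. A \<inter> B = {} \<longrightarrow> compactin T A \<or> compactin T B"
    have un: "E U \<union> E W \<in> E ` Op" if U: "U \<in> Op" and W: "W \<in> Op" for U W
    proof -
      have UW: "U \<union> W \<in> Op" using G(4) U W by blast
      have eq: "X - (U \<union> W) = (X - U) \<inter> (X - W)" by blast
      have "E U \<union> E W = E (U \<union> W)"
      proof (cases "compactin T (X - U) \<or> compactin T (X - W)")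
        case True
        then have "compactin T (X - (U \<union> W))"
          unfolding eq using closed_Int_compactin closedT U W by (metis Int_commute)
        then show ?thesis using Ex_eq U W UW True by auto
      next
        case False
        then have "\<not> compactin T (X - (U \<union> W))"
          unfolding eq using L[OF P] Cl_iff U W by blast
        then show ?thesis using Ex_eq U W UW False by auto
      qed
      then show ?thesis using UW by blast
    qed
    have empty: "{} \<in> E ` Op"
    proof -
      have "\<not> compactin T (X - {})" using assms(4) topT unfolding T_def compact_space_def by simp
      then have "E {} = {}" using Ex_eq G(2) by simp
      then show ?thesis using G(2) by force
    qed
    show "\<forall>F. finite F \<and> F \<subseteq> E ` Op \<longrightarrow> \<Union>F \<in> E ` Op"
    proof (intro allI impI, elim conjE)
      fix F assume "finite F" "F \<subseteq> E ` Op"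
      then show "\<Union>F \<in> E ` Op"
      proof (induction rule: finite_induct)
        case empty then show ?case using \<open>{} \<in> E ` Op\<close> by simp
      next
        case (insert x F)
        then obtain U W where "U \<in> Op" "x = E U" "W \<in> Op" "\<Union>F = E W" by auto
        then show ?case using un by simp
      qed
    qed
  qed
qed

end
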